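(* Let $X$ be a real vector space and let $A,B\subseteq X$ be two disjoint convex sets such that $A$ is vectorially closed and relatively solid. Suppose moreover that $B\subseteq Y$ for some finite-dimensional subspace $Y$ of $X$ and that $B$ is compact in $Y$ (with its usual Euclidean topology). Then $A$ and $B$ can be strongly separated by some $f\in X'$, i.e. there is $f\in X'$ with $\sup_{a\in A}f(a)<\inf_{b\in B}f(b)$.
   Context: $X'$ is the algebraic dual of $X$. For $C\subseteq X$: $vcl(C):=\{b\in X:\ \exists x\in X \text{ such that } \forall\lambda'>0\ \exists\lambda\in[0,\lambda'] \text{ with } b+\lambda x\in C\}$; $C$ is vectorially closed if $vcl(C)=C$; $C$ is relatively solid if $icr(C)\ne\emptyset$, where $icr(C):=\{x\in C:\ \forall x'\in span(C-C)\ \exists \lambda'>0 \text{ with } x+\lambda x'\in C\ \forall\lambda\in[0,\lambda']\}$. *)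

theory Defs
  imports "HOL-Analysis.Analysis"
begin

definition vcl :: "'a::real_vector set \<Rightarrow> 'a set" where
  "vcl C = {b. \<exists>x. \<forall>l'>0. \<exists>l\<in>{0..l'}. b + l *\<^sub>R x \<in> C}"

definition vectorially_closed :: "'a::real_vector set \<Rightarrow> bool" where
  "vectorially_closed C \<longleftrightarrow> vcl C = C"

definition icr :: "'a::real_vector set \<Rightarrow> 'a set" where
  "icr C = {x\<in>C. \<forall>x'\<in>span {c - d | c d. c \<in> C \<and> d \<in> C}.
              \<exists>l'>0. \<forall>l\<in>{0..l'}. x + l *\<^sub>R x' \<in> C}"

definition relatively_solid :: "'a::real_vector set \<Rightarrow> bool" where
  "relatively_solid C \<longleftrightarrow> icr C \<noteq> {}"

text \<open>A set B contained in a finite-dimensional subspace Y is compact in Y (with its usual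
  Euclidean topology) iff its image under some (equivalently: every) injective linear map of
  Y into a Euclidean space is compact.\<close>
definition compact_in_fd :: "'b::euclidean_space itself \<Rightarrow> 'a::real_vector set \<Rightarrow> 'a set \<Rightarrow> bool" where
  "compact_in_fd T Y B \<longleftrightarrow> (\<exists>g :: 'a \<Rightarrow> 'b. linear g \<and> inj_on g Y \<and> compact (g ` B))"

end

theory Submission
  imports Defs
begin

definition ext_ok :: "'a::real_vector set \<Rightarrow> 'a set \<Rightarrow> ('a \<Rightarrow> real) \<Rightarrow> ('a \<Rightarrow> real) \<Rightarrow> ('a \<times> real) set \<Rightarrow> bool" where
 "ext_ok V L p h G \<longleftrightarrow> (\<forall>x y1 y2. (x,y1)\<in>G \<longrightarrow> (x,y2)\<in>G \<longrightarrow> y1=y2)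
   \<and> (\<forall>x a y b. (x,a)\<in>G \<longrightarrow> (y,b)\<in>G \<longrightarrow> (x+y,a+b)\<in>G)
   \<and> (\<forall>x a c. (x,a)\<in>G \<longrightarrow> (c *\<^sub>R x, c*a)\<in>G)
   \<and> (\<forall>x a. (x,a)\<in>G \<longrightarrow> x\<in>L \<longrightarrow> a \<le> p x)
   \<and> (\<forall>x\<in>V. (x, h x)\<in>G)"

lemma ext_okD:
  assumes "ext_ok V L p h G"
  shows "(x,y1)\<in>G \<Longrightarrow> (x,y2)\<in>G \<Longrightarrow> y1=y2"
    and "(x,a)\<in>G \<Longrightarrow> (y,b)\<in>G \<Longrightarrow> (x+y,a+b)\<in>G"
    and "(x,a)\<in>G \<Longrightarrow> (c *\<^sub>R x, c*a)\<in>G"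
    and "(x,a)\<in>G \<Longrightarrow> x\<in>L \<Longrightarrow> a \<le> p x"
    and "x\<in>V \<Longrightarrow> (x, h x)\<in>G"
  using assms unfolding ext_ok_def by blast+

lemma ext_ok_chain:
  assumes ne: "\<C> \<noteq> {}" and ch: "\<forall>G\<in>\<C>. ext_ok V L p h G"
    and cmp: "\<forall>G1\<in>\<C>. \<forall>G2\<in>\<C>. G1 \<subseteq> G2 \<or> G2 \<subseteq> G1"
  shows "ext_ok V L p h (\<Union>\<C>)"
proof -
  have two: "\<exists>G\<in>\<C>. u \<in> G \<and> v \<in> G" if uv: "u \<in> \<Union>\<C>" "v \<in> \<Union>\<C>" for u v
  proof -
    obtain G1 G2 where "G1\<in>\<C>" "G2\<in>\<C>" "u\<in>G1" "v\<in>G2" using uv by (meson UnionE)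
    then show ?thesis using cmp by blast
  qed
  show ?thesis unfolding ext_ok_def
  proof (intro conjI allI impI ballI)
    fix x y1 y2 assume "(x,y1) \<in> \<Union>\<C>" "(x,y2) \<in> \<Union>\<C>"
    from two[OF this] obtain G where "G\<in>\<C>" "(x,y1)\<in>G" "(x,y2)\<in>G" by blast
    then show "y1 = y2" using ext_okD(1)[of V L p h G] ch by blast
  next
    fix x a y b assume "(x,a) \<in> \<Union>\<C>" "(y,b) \<in> \<Union>\<C>"
    from two[OF this] obtain G where "G\<in>\<C>" "(x,a)\<in>G" "(y,b)\<in>G" by blast
    then have "(x+y,a+b) \<in> G" using ext_okD(2)[of V L p h G] ch by blast
    then show "(x+y,a+b) \<in> \<Union>\<C>" using \<open>G\<in>\<C>\<close> by blast
  next
    fix x a c assume "(x,a) \<in> \<Union>\<C>"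
    then obtain G where "G\<in>\<C>" "(x,a)\<in>G" by blast
    then have "(c *\<^sub>R x, c*a) \<in> G" using ext_okD(3)[of V L p h G] ch by blast
    then show "(c *\<^sub>R x, c*a) \<in> \<Union>\<C>" using \<open>G\<in>\<C>\<close> by blast
  next
    fix x a assume "(x,a) \<in> \<Union>\<C>" "x \<in> L"
    then obtain G where "G\<in>\<C>" "(x,a)\<in>G" by blast
    then show "a \<le> p x" using ext_okD(4)[of V L p h G] ch \<open>x\<in>L\<close> by blast
  next
    fix x assume "x \<in> V"
    obtain G where "G \<in> \<C>" using ne by blast
    then have "(x, h x) \<in> G" using ext_okD(5)[of V L p h G] ch \<open>x\<in>V\<close> by blast
    then show "(x, h x) \<in> \<Union>\<C>" using \<open>G\<in>\<C>\<close> by blast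
  qed
qed

lemma ext_ok_step:
  assumes ok: "ext_ok V L p h G" and z: "z \<notin> fst ` G" and ne: "G \<noteq> {}"
    and c: "\<And>s a t. (s,a)\<in>G \<Longrightarrow> s + t *\<^sub>R z \<in> L \<Longrightarrow> a + t*c \<le> p (s + t *\<^sub>R z)"
  shows "ext_ok V L p h {(s + t *\<^sub>R z, a + t*c) | s a t. (s,a)\<in>G}"
    and "(z, c) \<in> {(s + t *\<^sub>R z, a + t*c) | s a t. (s,a)\<in>G}"
    and "G \<subseteq> {(s + t *\<^sub>R z, a + t*c) | s a t. (s,a)\<in>G}"
proof -
  have fn1: "\<And>x y1 y2. (x,y1)\<in>G \<Longrightarrow> (x,y2)\<in>G \<Longrightarrow> y1=y2"
    and add: "\<And>x a y b. (x,a)\<in>G \<Longrightarrow> (y,b)\<in>G \<Longrightarrow> (x+y,a+b)\<in>G"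
    and scl: "\<And>x a c. (x,a)\<in>G \<Longrightarrow> (c *\<^sub>R x, c*a)\<in>G"
    and V: "\<And>x. x\<in>V \<Longrightarrow> (x, h x)\<in>G"
    using ext_okD[OF ok] by blast+
  let ?G' = "{(s + t *\<^sub>R z, a + t*c) | s a t. (s,a)\<in>G}"
  have mem: "(s + t *\<^sub>R z, a + t*c) \<in> ?G'" if "(s,a) \<in> G" for s a t
    using that by blast
  have sub: "G \<subseteq> ?G'"
  proof
    fix u assume "u \<in> G"
    then obtain s a where u: "u = (s,a)" "(s,a)\<in>G" by (cases u) auto
    have "(s + 0 *\<^sub>R z, a + 0*c) \<in> ?G'" by (rule mem[OF u(2)])
    then show "u \<in> ?G'" using u(1) by simp
  qed
  show "G \<subseteq> ?G'" by (fact sub)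
  have zero: "(0,0) \<in> G"
  proof -
    obtain u where "u \<in> G" using ne by blast
    then obtain s a where "(s,a)\<in>G" by (cases u) auto
    from scl[OF this, of 0] show ?thesis by simp
  qed
  have "(0 + 1 *\<^sub>R z, 0 + 1*c) \<in> ?G'" by (rule mem[OF zero])
  then show "(z, c) \<in> ?G'" by simp
  show "ext_ok V L p h ?G'" unfolding ext_ok_def
  proof (intro conjI allI impI ballI)
    fix x y1 y2 assume h1: "(x,y1) \<in> ?G'" and h2: "(x,y2) \<in> ?G'"
    from h1 obtain s a t where 1: "x = s + t *\<^sub>R z" "y1 = a + t*c" "(s,a)\<in>G" by blast
    from h2 obtain s' a' t' where 2: "x = s' + t' *\<^sub>R z" "y2 = a' + t'*c" "(s',a')\<in>G" by blast
    have "t = t'"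
    proof (rule ccontr)
      assume ne: "t \<noteq> t'"
      have "(s + (-1) *\<^sub>R s', a + (-1)*a') \<in> G" using add[OF 1(3) scl[OF 2(3)]] .
      from scl[OF this, of "inverse (t' - t)"]
      have "(inverse (t' - t) *\<^sub>R (s - s'), inverse (t' - t) * (a - a')) \<in> G" by simp
      moreover have "inverse (t' - t) *\<^sub>R (s - s') = z"
      proof -
        have "s - s' = (t' - t) *\<^sub>R z" using 1(1) 2(1) by (simp add: algebra_simps)
        then show ?thesis using ne by simp
      qed
      ultimately have "(z, inverse (t' - t) * (a - a')) \<in> G" by simp
      then have "z \<in> fst ` G" by (metis fst_conv image_eqI)
      with z show False by blast
    qed
    then have "s = s'" using 1(1) 2(1) by simp
    then have "a = a'" using fn1 1(3) 2(3) by blast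
    then show "y1 = y2" using 1 2 \<open>t = t'\<close> by simp
  next
    fix x a y b assume h1: "(x,a) \<in> ?G'" and h2: "(y,b) \<in> ?G'"
    from h1 obtain s a1 t where 1: "x = s + t *\<^sub>R z" "a = a1 + t*c" "(s,a1)\<in>G" by blast
    from h2 obtain s' a' t' where 2: "y = s' + t' *\<^sub>R z" "b = a' + t'*c" "(s',a')\<in>G" by blast
    have "(s + s', a1 + a') \<in> G" using add 1(3) 2(3) by blast
    from mem[OF this, of "t + t'"]
    have "((s + s') + (t + t') *\<^sub>R z, (a1 + a') + (t + t') * c) \<in> ?G'" .
    moreover have "x + y = (s + s') + (t + t') *\<^sub>R z" "a + b = (a1 + a') + (t + t') * c"
      using 1 2 by (simp_all add: algebra_simps)
    ultimately show "(x + y, a + b) \<in> ?G'" by simp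
  next
    fix x a r assume h1: "(x,a) \<in> ?G'"
    from h1 obtain s a1 t where 1: "x = s + t *\<^sub>R z" "a = a1 + t*c" "(s,a1)\<in>G" by blast
    have "(r *\<^sub>R s, r * a1) \<in> G" using scl 1(3) by blast
    from mem[OF this, of "r * t"]
    have "(r *\<^sub>R s + (r * t) *\<^sub>R z, r * a1 + (r * t) * c) \<in> ?G'" .
    moreover have "r *\<^sub>R x = r *\<^sub>R s + (r * t) *\<^sub>R z" "r * a = r * a1 + (r * t) * c"
      using 1 by (simp_all add: algebra_simps)
    ultimately show "(r *\<^sub>R x, r * a) \<in> ?G'" by simp
  next
    fix x a assume h1: "(x,a) \<in> ?G'" and "x \<in> L"
    from h1 obtain s a1 t where 1: "x = s + t *\<^sub>R z" "a = a1 + t*c" "(s,a1)\<in>G" by blast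
    show "a \<le> p x" using c[OF 1(3)] 1 \<open>x \<in> L\<close> by simp
  next
    fix x assume "x \<in> V"
    then show "(x, h x) \<in> ?G'" using V sub by blast
  qed
qed

lemma choose_c_L:
  fixes L :: "'a::real_vector set"
  assumes ok: "ext_ok V L p h G" and L: "subspace L" and zL: "z \<in> L" and G0: "(0,0) \<in> G"
    and sub: "\<forall>x\<in>L. \<forall>y\<in>L. p (x+y) \<le> p x + p y"
    and hom: "\<forall>x\<in>L. \<forall>r>0. p (r *\<^sub>R x) = r * p x"
  shows "\<exists>c. \<forall>s a t. (s,a)\<in>G \<longrightarrow> s + t *\<^sub>R z \<in> L \<longrightarrow> a + t*c \<le> p (s + t *\<^sub>R z)"
proof -
  let ?Lo = "{a - p (s - z) | s a. (s,a)\<in>G \<and> s\<in>L}"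
  have bnd: "a' - p (s' - z) \<le> p (s + z) - a"
    if "(s,a)\<in>G" "s\<in>L" "(s',a')\<in>G" "s'\<in>L" for s a s' a'
  proof -
    have "(s+s', a+a') \<in> G" using ext_okD(2)[OF ok] that by blast
    moreover have "s + s' \<in> L" using L that by (simp add: subspace_add)
    ultimately have "a + a' \<le> p (s + s')" using ext_okD(4)[OF ok] by blast
    moreover have "s + z \<in> L" "s' - z \<in> L" using L that zL by (simp_all add: subspace_add subspace_diff)
    then have "p ((s + z) + (s' - z)) \<le> p (s + z) + p (s' - z)" using sub by blast
    ultimately show ?thesis by simp
  qed
  have ne: "?Lo \<noteq> {}" using G0 L by (auto simp: subspace_0)
  have bdd: "bdd_above ?Lo"
    unfolding bdd_above_def using bnd[OF G0 subspace_0[OF L]] by auto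
  define c where "c = Sup ?Lo"
  have up: "c \<le> p (s + z) - a" if "(s,a)\<in>G" "s\<in>L" for s a
    unfolding c_def by (rule cSup_least[OF ne]) (use bnd[OF that] in auto)
  have lo: "a - p (s - z) \<le> c" if "(s,a)\<in>G" "s\<in>L" for s a
    unfolding c_def by (rule cSup_upper[OF _ bdd]) (use that in auto)
  show ?thesis
  proof (intro exI allI impI)
    fix s a t assume sa: "(s,a)\<in>G" and stL: "s + t *\<^sub>R z \<in> L"
    have sL: "s \<in> L"
    proof -
      have "t *\<^sub>R z \<in> L" using zL L by (simp add: subspace_scale)
      then have "(s + t *\<^sub>R z) - t *\<^sub>R z \<in> L" using stL L subspace_diff by blast
      then show ?thesis by simp
    qed
    consider "t > 0" | "t = 0" | "t < 0" by linarith
    then show "a + t*c \<le> p (s + t *\<^sub>R z)"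
    proof cases
      case 1
      have g: "(inverse t *\<^sub>R s, inverse t * a) \<in> G" using ext_okD(3)[OF ok sa] .
      have gL: "inverse t *\<^sub>R s \<in> L" using sL L by (simp add: subspace_scale)
      have "c \<le> p (inverse t *\<^sub>R s + z) - inverse t * a" using up[OF g gL] .
      then have "t * c \<le> t * p (inverse t *\<^sub>R s + z) - a"
        using 1 by (simp add: field_simps)
      also have "t * p (inverse t *\<^sub>R s + z) = p (t *\<^sub>R (inverse t *\<^sub>R s + z))"
        using hom 1 gL zL L by (simp add: subspace_add)
      also have "t *\<^sub>R (inverse t *\<^sub>R s + z) = s + t *\<^sub>R z"
        using 1 by (simp add: scaleR_add_right)
      finally show ?thesis by simp
    next
      case 2
      then show ?thesis using ext_okD(4)[OF ok sa sL] by simp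
    next
      case 3
      define r where "r = - t"
      have r: "r > 0" using 3 r_def by simp
      have g: "(inverse r *\<^sub>R s, inverse r * a) \<in> G" using ext_okD(3)[OF ok sa] .
      have gL: "inverse r *\<^sub>R s \<in> L" using sL L by (simp add: subspace_scale)
      have "inverse r * a - p (inverse r *\<^sub>R s - z) \<le> c" using lo[OF g gL] .
      then have "a - r * p (inverse r *\<^sub>R s - z) \<le> r * c"
        using r by (simp add: field_simps)
      also have "r * p (inverse r *\<^sub>R s - z) = p (r *\<^sub>R (inverse r *\<^sub>R s - z))"
        using hom r gL zL L by (simp add: subspace_diff)
      also have "r *\<^sub>R (inverse r *\<^sub>R s - z) = s + t *\<^sub>R z"
        using r r_def by (simp add: scaleR_diff_right)
      finally show ?thesis using r_def by simp
    qed
  qed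
qed

lemma choose_c_out:
  assumes ok: "ext_ok V L p h G" and LG: "L \<subseteq> fst ` G" and z: "z \<notin> fst ` G"
  shows "\<forall>s a t. (s,a)\<in>G \<longrightarrow> s + t *\<^sub>R z \<in> L \<longrightarrow> a + t*0 \<le> p (s + t *\<^sub>R z)"
proof (intro allI impI)
  fix s a t assume sa: "(s,a)\<in>G" and stL: "s + t *\<^sub>R z \<in> L"
  have "t = 0"
  proof (rule ccontr)
    assume t: "t \<noteq> 0"
    obtain b where b: "(s + t *\<^sub>R z, b) \<in> G" using stL LG by force
    have "((s + t *\<^sub>R z) + (-1) *\<^sub>R s, b + (-1) * a) \<in> G"
      using ext_okD(2)[OF ok b ext_okD(3)[OF ok sa]] .
    from ext_okD(3)[OF ok this, of "inverse t"]
    have "(z, inverse t * (b - a)) \<in> G" using t by simp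
    then have "z \<in> fst ` G" by (metis fst_conv image_eqI)
    with z show False by blast
  qed
  then show "a + t*0 \<le> p (s + t *\<^sub>R z)" using ext_okD(4)[OF ok sa] stL by simp
qed

lemma hahn_banach_ext:
  fixes V L :: "'a::real_vector set" and h p :: "'a \<Rightarrow> real"
  assumes V: "subspace V" and L: "subspace L" and h: "linear h"
    and hp: "\<forall>x\<in>V\<inter>L. h x \<le> p x"
    and sub: "\<forall>x\<in>L. \<forall>y\<in>L. p (x+y) \<le> p x + p y"
    and hom: "\<forall>x\<in>L. \<forall>r>0. p (r *\<^sub>R x) = r * p x"
  shows "\<exists>F. linear F \<and> (\<forall>x\<in>V. F x = h x) \<and> (\<forall>x\<in>L. F x \<le> p x)"
proof -
  let ?A = "{G. ext_ok V L p h G}"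
  let ?G0 = "{(x, h x) | x. x \<in> V}"
  have G0: "ext_ok V L p h ?G0" unfolding ext_ok_def
  proof (intro conjI allI impI ballI)
    fix x y1 y2 assume "(x,y1) \<in> ?G0" "(x,y2) \<in> ?G0" then show "y1 = y2" by blast
  next
    fix x a y b assume "(x,a) \<in> ?G0" "(y,b) \<in> ?G0"
    then have "x \<in> V" "y \<in> V" "a = h x" "b = h y" by auto
    then show "(x+y, a+b) \<in> ?G0" using V h by (auto simp: subspace_add linear_add)
  next
    fix x a c assume "(x,a) \<in> ?G0"
    then have "x \<in> V" "a = h x" by auto
    then show "(c *\<^sub>R x, c*a) \<in> ?G0" using V h by (auto simp: subspace_scale linear_scale)
  next
    fix x a assume "(x,a) \<in> ?G0" "x \<in> L"
    then show "a \<le> p x" using hp by auto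
  next
    fix x assume "x \<in> V" then show "(x, h x) \<in> ?G0" by blast
  qed
  have "\<exists>M\<in>?A. \<forall>X\<in>?A. M \<subseteq> X \<longrightarrow> X = M"
  proof (rule subset_Zorn_nonempty)
    show "?A \<noteq> {}" using G0 by blast
  next
    fix C assume ne: "C \<noteq> {}" and ch: "subset.chain ?A C"
    have "\<forall>G\<in>C. ext_ok V L p h G" "\<forall>G1\<in>C. \<forall>G2\<in>C. G1 \<subseteq> G2 \<or> G2 \<subseteq> G1"
      using ch unfolding subset.chain_def by auto
    from ext_ok_chain[OF ne this] show "\<Union>C \<in> ?A" by simp
  qed
  then obtain M where M: "ext_ok V L p h M" and max: "\<And>X. ext_ok V L p h X \<Longrightarrow> M \<subseteq> X \<Longrightarrow> X = M"
    by blast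
  have M0: "(0,0) \<in> M" using ext_okD(5)[OF M subspace_0[OF V]] h by (simp add: linear_0)
  then have Mne: "M \<noteq> {}" by blast
  have all: "x \<in> fst ` M" for x
  proof (rule ccontr)
    assume x: "x \<notin> fst ` M"
    have "\<exists>z c. z \<notin> fst ` M \<and> (\<forall>s a t. (s,a)\<in>M \<longrightarrow> s + t *\<^sub>R z \<in> L \<longrightarrow> a + t*c \<le> p (s + t *\<^sub>R z))"
    proof (cases "L \<subseteq> fst ` M")
      case True
      then show ?thesis using choose_c_out[OF M True x] x by blast
    next
      case False
      then obtain z where z: "z \<in> L" "z \<notin> fst ` M" by blast
      from choose_c_L[OF M L z(1) M0 sub hom] z(2) show ?thesis by blast
    qed
    then obtain z c where z: "z \<notin> fst ` M"
      and c: "\<And>s a t. (s,a)\<in>M \<Longrightarrow> s + t *\<^sub>R z \<in> L \<Longrightarrow> a + t*c \<le> p (s + t *\<^sub>R z)" by blast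
    note st = ext_ok_step[OF M z Mne c]
    have eq: "{(s + t *\<^sub>R z, a + t*c) | s a t. (s,a)\<in>M} = M" using max[OF st(1) st(3)] .
    have "(z,c) \<in> M" using st(2) unfolding eq .
    then have "z \<in> fst ` M" by (metis fst_conv image_eqI)
    with z show False by blast
  qed
  define F where "F x = (THE y. (x,y) \<in> M)" for x
  have FM: "(x, F x) \<in> M" for x
  proof -
    obtain y where y: "(x,y) \<in> M" using all[of x] by force
    have "(THE y. (x,y) \<in> M) = y" using ext_okD(1)[OF M y] y by (intro the_equality) blast+
    then show ?thesis using y F_def by simp
  qed
  have Fu: "F x = y" if "(x,y) \<in> M" for x y using ext_okD(1)[OF M that FM[of x]] by simp
  show ?thesis
  proof (intro exI conjI ballI)
    show "linear F" unfolding linear_iff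
    proof (intro conjI allI)
      fix x y show "F (x + y) = F x + F y" using Fu ext_okD(2)[OF M FM[of x] FM[of y]] by blast
    next
      fix c x show "F (c *\<^sub>R x) = c *\<^sub>R F x" using Fu ext_okD(3)[OF M FM[of x], of c] by simp
    qed
  next
    fix x assume "x \<in> V" then show "F x = h x" using Fu ext_okD(5)[OF M] by blast
  next
    fix x assume "x \<in> L" then show "F x \<le> p x" using ext_okD(4)[OF M FM[of x]] by blast
  qed
qed

definition gT :: "'a::real_vector set \<Rightarrow> 'a \<Rightarrow> 'a \<Rightarrow> real set" where
  "gT A a0 x = {t. 0 < t \<and> a0 + inverse t *\<^sub>R x \<in> A}"

definition gq :: "'a::real_vector set \<Rightarrow> 'a \<Rightarrow> 'a \<Rightarrow> real" where
  "gq A a0 x = Inf (gT A a0 x)"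

lemma gT_bdd: "bdd_below (gT A a0 x)"
  unfolding bdd_below_def gT_def by (rule exI[of _ 0]) auto

lemma gT_ne:
  assumes core: "\<forall>x\<in>L. \<exists>l'>0. \<forall>l\<in>{0..l'}. a0 + l *\<^sub>R x \<in> A" and x: "x \<in> L"
  shows "gT A a0 x \<noteq> {}"
proof -
  obtain l' where l': "l' > 0" "\<forall>l\<in>{0..l'}. a0 + l *\<^sub>R x \<in> A" using core x by blast
  then have "inverse l' \<in> gT A a0 x" unfolding gT_def by auto
  then show ?thesis by blast
qed

lemma gq_le: "t \<in> gT A a0 x \<Longrightarrow> gq A a0 x \<le> t"
  unfolding gq_def by (rule cInf_lower[OF _ gT_bdd])

lemma gq_ge: "gT A a0 x \<noteq> {} \<Longrightarrow> (\<And>t. t \<in> gT A a0 x \<Longrightarrow> u \<le> t) \<Longrightarrow> u \<le> gq A a0 x"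
  unfolding gq_def by (rule cInf_greatest)

lemma gq_A: "a \<in> A \<Longrightarrow> gq A a0 (a - a0) \<le> 1"
  by (rule gq_le) (simp add: gT_def)

lemma gT_add:
  assumes A: "convex A" and s: "s \<in> gT A a0 x" and t: "t \<in> gT A a0 y"
  shows "s + t \<in> gT A a0 (x + y)"
proof -
  have s0: "s > 0" and sA: "a0 + inverse s *\<^sub>R x \<in> A" using s unfolding gT_def by auto
  have t0: "t > 0" and tA: "a0 + inverse t *\<^sub>R y \<in> A" using t unfolding gT_def by auto
  have st: "s + t > 0" using s0 t0 by simp
  have mA: "(s/(s+t)) *\<^sub>R (a0 + inverse s *\<^sub>R x) + (t/(s+t)) *\<^sub>R (a0 + inverse t *\<^sub>R y) \<in> A"
    using A sA tA s0 t0 st unfolding convex_def by (auto simp: add_divide_distrib[symmetric])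
  have c1: "s/(s+t) + t/(s+t) = 1" using st by (simp add: add_divide_distrib[symmetric])
  have c2: "(s/(s+t)) * inverse s = inverse (s+t)" using s0 st by (simp add: field_simps)
  have c3: "(t/(s+t)) * inverse t = inverse (s+t)" using t0 st by (simp add: field_simps)
  have "(s/(s+t)) *\<^sub>R (a0 + inverse s *\<^sub>R x) + (t/(s+t)) *\<^sub>R (a0 + inverse t *\<^sub>R y)
      = ((s/(s+t)) *\<^sub>R a0 + (t/(s+t)) *\<^sub>R a0) + (((s/(s+t)) * inverse s) *\<^sub>R x + ((t/(s+t)) * inverse t) *\<^sub>R y)"
    by (simp add: scaleR_add_right algebra_simps)
  also have "\<dots> = a0 + inverse (s+t) *\<^sub>R (x + y)"
    unfolding c2 c3 scaleR_add_left[symmetric] c1 by (simp add: scaleR_add_right)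
  finally have "(s/(s+t)) *\<^sub>R (a0 + inverse s *\<^sub>R x) + (t/(s+t)) *\<^sub>R (a0 + inverse t *\<^sub>R y)
      = a0 + inverse (s+t) *\<^sub>R (x + y)" .
  then show ?thesis using st mA unfolding gT_def by simp
qed

lemma gq_add:
  assumes A: "convex A" and nx: "gT A a0 x \<noteq> {}" and ny: "gT A a0 y \<noteq> {}"
  shows "gq A a0 (x + y) \<le> gq A a0 x + gq A a0 y"
proof -
  have "gq A a0 (x+y) - t \<le> gq A a0 x" if t: "t \<in> gT A a0 y" for t
  proof (rule gq_ge[OF nx])
    fix s assume "s \<in> gT A a0 x"
    from gq_le[OF gT_add[OF A this t]] show "gq A a0 (x + y) - t \<le> s" by simp
  qed
  then have "gq A a0 (x+y) - gq A a0 x \<le> t" if "t \<in> gT A a0 y" for t using that by force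
  then have "gq A a0 (x+y) - gq A a0 x \<le> gq A a0 y" by (rule gq_ge[OF ny])
  then show ?thesis by simp
qed

lemma gT_scale: assumes "r > 0" "t \<in> gT A a0 x" shows "r * t \<in> gT A a0 (r *\<^sub>R x)"
proof -
  have eq: "inverse (r * t) *\<^sub>R (r *\<^sub>R x) = inverse t *\<^sub>R x" using assms(1) by simp
  have "t > 0" "a0 + inverse t *\<^sub>R x \<in> A" using assms(2) unfolding gT_def by auto
  then show ?thesis unfolding gT_def mem_Collect_eq eq using assms(1) by simp
qed

lemma gT_unscale: assumes "r > 0" "u \<in> gT A a0 (r *\<^sub>R x)" shows "u / r \<in> gT A a0 x"
proof -
  have eq: "inverse (u / r) *\<^sub>R x = inverse u *\<^sub>R (r *\<^sub>R x)" using assms(1) by (simp add: divide_inverse mult.commute)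
  have "u > 0" "a0 + inverse u *\<^sub>R (r *\<^sub>R x) \<in> A" using assms(2) unfolding gT_def by auto
  then show ?thesis unfolding gT_def mem_Collect_eq eq using assms(1) by simp
qed

lemma gq_scale:
  assumes r: "r > 0" and nx: "gT A a0 x \<noteq> {}"
  shows "gq A a0 (r *\<^sub>R x) = r * gq A a0 x"
proof -
  obtain t0 where "t0 \<in> gT A a0 x" using nx by blast
  then have nrx: "gT A a0 (r *\<^sub>R x) \<noteq> {}" using gT_scale[OF r] by blast
  have "gq A a0 (r *\<^sub>R x) / r \<le> t" if "t \<in> gT A a0 x" for t
  proof -
    have "gq A a0 (r *\<^sub>R x) \<le> r * t" by (rule gq_le[OF gT_scale[OF r that]])
    then show ?thesis using r by (simp add: field_simps)
  qed
  then have 1: "gq A a0 (r *\<^sub>R x) / r \<le> gq A a0 x" by (rule gq_ge[OF nx])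
  have "r * gq A a0 x \<le> u" if "u \<in> gT A a0 (r *\<^sub>R x)" for u
  proof -
    have "gq A a0 x \<le> u / r" by (rule gq_le[OF gT_unscale[OF r that]])
    then show ?thesis using r by (simp add: field_simps)
  qed
  then have 2: "r * gq A a0 x \<le> gq A a0 (r *\<^sub>R x)" by (rule gq_ge[OF nrx])
  show ?thesis using 1 2 r by (simp add: field_simps)
qed

lemma gq_bound:
  assumes nx: "gT A a0 x \<noteq> {}" and g: "\<gamma> \<ge> 0" and b: "\<And>t. t \<in> gT A a0 x \<Longrightarrow> u \<le> \<gamma> * t"
  shows "u \<le> \<gamma> * gq A a0 x"
proof (cases "\<gamma> = 0")
  case True
  obtain t where "t \<in> gT A a0 x" using nx by blast
  then show ?thesis using b True by force
next
  case False
  then have g0: "\<gamma> > 0" using g by simp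
  have "u / \<gamma> \<le> gq A a0 x"
  proof (rule gq_ge[OF nx])
    fix t assume "t \<in> gT A a0 x"
    then have "u \<le> \<gamma> * t" by (rule b)
    then show "u / \<gamma> \<le> t" using g0 by (simp add: pos_divide_le_eq mult.commute)
  qed
  then show ?thesis using g0 by (simp add: field_simps)
qed

lemma exists_phi:
  fixes Y :: "'a::real_vector set"
  assumes Y: "subspace Y"
  obtains \<phi> :: "'a \<Rightarrow> real" where "linear \<phi>" "\<forall>y\<in>Y. \<phi> y = 0" "a0 \<notin> Y \<longrightarrow> \<phi> a0 = 1"
proof (cases "a0 \<in> Y")
  case True
  show ?thesis by (rule that[of "\<lambda>x. 0"]) (use True linear_zero in auto)
next
  case False
  obtain Bs where Bs: "Bs \<subseteq> Y" "independent Bs" "Y \<subseteq> span Bs" by (rule basis_exists[of Y])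
  have sp: "span Bs = Y" using span_subspace[OF Bs(1) Bs(3) Y] .
  have ind: "independent (insert a0 Bs)" using Bs False sp by (simp add: independent_insert)
  obtain \<phi> :: "'a \<Rightarrow> real" where \<phi>: "linear \<phi>" "\<forall>x\<in>insert a0 Bs. \<phi> x = (if x = a0 then 1 else 0)"
    using linear_independent_extend[OF ind, of "\<lambda>x. if x = a0 then (1::real) else 0"] by blast
  have "\<forall>y\<in>Y. \<phi> y = 0"
  proof
    fix y assume "y \<in> Y"
    then have "y \<in> span Bs" using sp by simp
    moreover have "\<And>x. x \<in> Bs \<Longrightarrow> \<phi> x = 0" using \<phi>(2) Bs(1) False by auto
    ultimately show "\<phi> y = 0" using linear_eq_0_on_span[OF \<phi>(1)] by blast
  qed
  then show ?thesis using that[of \<phi>] \<phi> by auto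
qed

lemma seg_aux:
  fixes G :: "'a::real_vector \<Rightarrow> 'b::real_vector"
  assumes linG: "linear G" and injG: "inj_on G V" and subV: "subspace V"
    and v: "v \<in> V" "x = G v" and w: "w \<in> V" "c = G w"
    and a: "G a = x - e *\<^sub>R (x - c)" "a \<in> V"
  shows "a = v + e *\<^sub>R (w - v)"
proof -
  have "G (v + e *\<^sub>R (w - v)) = G v + e *\<^sub>R (G w - G v)"
    using linG by (simp add: linear_add linear_diff linear_scale)
  also have "\<dots> = x - e *\<^sub>R (x - c)"
    using v(2) w(2) by (simp add: scaleR_diff_right)
  finally have eqG: "G a = G (v + e *\<^sub>R (w - v))" using a(1) by simp
  have "w - v \<in> V" using subV v(1) w(1) by (simp add: subspace_diff)
  then have "v + e *\<^sub>R (w - v) \<in> V" using subV v(1)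
    by (simp add: subspace_add subspace_scale)
  then show ?thesis using inj_onD[OF injG eqG a(2)] by blast
qed

lemma fd_sep:
  fixes A B Y :: "'a::real_vector set" and g :: "'a \<Rightarrow> 'b::euclidean_space"
  assumes cA: "convex A" and cB: "convex B" and dis: "A \<inter> B = {}"
    and vc: "vectorially_closed A" and a0: "a0 \<in> A"
    and Y: "subspace Y" and BY: "B \<subseteq> Y" and g: "linear g" and inj: "inj_on g Y"
    and cpt: "compact (g ` B)" and Bne: "B \<noteq> {}"
  shows "\<exists>(h::'a \<Rightarrow> real) cc \<beta>. linear h \<and> (\<forall>a\<in>A \<inter> span (insert a0 Y). h a < cc) \<and> cc < \<beta> \<and> (\<forall>b\<in>B. \<beta> \<le> h b)"
proof -
  obtain \<phi> :: "'a \<Rightarrow> real" where \<phi>: "linear \<phi>" "\<forall>y\<in>Y. \<phi> y = 0" "a0 \<notin> Y \<longrightarrow> \<phi> a0 = 1"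
    using exists_phi[OF Y] by blast
  define G where "G v = (g v, \<phi> v)" for v
  have linG: "linear G" unfolding linear_iff G_def
    using g \<phi>(1) by (simp add: linear_add linear_scale)
  define V where "V = span (insert a0 Y)"
  have subV: "subspace V" unfolding V_def by (rule subspace_span)
  have YV: "Y \<subseteq> V" unfolding V_def by (meson span_superset subset_insertI subset_trans)
  have a0V: "a0 \<in> V" unfolding V_def by (simp add: span_base)
  have spY: "span Y = Y" using Y by (simp add: span_eq_iff)
  have ker: "v = 0" if v: "v \<in> V" "G v = 0" for v
  proof -
    obtain k where k: "v - k *\<^sub>R a0 \<in> Y" using v(1) unfolding V_def span_insert spY by blast
    have gv: "g v = 0" and pv: "\<phi> v = 0" using v(2) unfolding G_def by (simp_all add: zero_prod_def)
    show ?thesis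
    proof (cases "a0 \<in> Y")
      case True
      then have "v \<in> Y" using k Y by (metis diff_add_cancel subspace_add subspace_scale)
      then show ?thesis using inj gv g by (metis inj_on_def linear_0 subspace_0[OF Y])
    next
      case False
      have "\<phi> (v - k *\<^sub>R a0) = 0" using \<phi>(2) k by blast
      then have "\<phi> v = k * \<phi> a0" using \<phi>(1) by (simp add: linear_diff linear_scale)
      then have "k = 0" using pv False \<phi>(3) by simp
      then have "v \<in> Y" using k by simp
      then show ?thesis using inj gv g by (metis inj_on_def linear_0 subspace_0[OF Y])
    qed
  qed
  have injG: "inj_on G V"
  proof (rule inj_onI)
    fix x y assume "x \<in> V" "y \<in> V" "G x = G y"
    then have "x - y \<in> V" "G (x - y) = 0" using subV linG by (simp_all add: subspace_diff linear_diff)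
    then have "x - y = 0" by (rule ker)
    then show "x = y" by simp
  qed
  define S where "S = G ` (A \<inter> V)"
  define K where "K = G ` B"
  have convS: "convex S" unfolding S_def
    by (rule convex_linear_image[OF linG convex_Int[OF cA subspace_imp_convex[OF subV]]])
  have convK: "convex K" unfolding K_def by (rule convex_linear_image[OF linG cB])
  have K_eq: "K = (\<lambda>u. (u, 0)) ` (g ` B)"
    unfolding K_def G_def using BY \<phi>(2) by (force simp: image_image)
  have cptK: "compact K" unfolding K_eq
    by (rule compact_continuous_image[OF _ cpt]) (intro continuous_intros)
  have Kne: "K \<noteq> {}" using Bne unfolding K_def by simp
  have disj: "S \<inter> K = {}"
  proof -
    have False if "a \<in> A \<inter> V" "b \<in> B" "G a = G b" for a b
    proof -
      have "b \<in> V" using that(2) BY YV by blast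
      then have "a = b" using injG that by (meson IntD2 inj_onD)
      then show False using dis that by blast
    qed
    then show ?thesis unfolding S_def K_def by blast
  qed
  have closedS: "closed S"
  proof -
    have Sne: "S \<noteq> {}" using a0 a0V unfolding S_def by blast
    obtain c where c: "c \<in> rel_interior S" using rel_interior_eq_empty[OF convS] Sne by blast
    have cS: "c \<in> S" using c rel_interior_subset by blast
    then obtain w where w: "w \<in> A \<inter> V" "c = G w" unfolding S_def by blast
    have clV: "closure S \<subseteq> G ` V"
    proof (rule closure_minimal)
      show "S \<subseteq> G ` V" unfolding S_def by blast
      show "closed (G ` V)" by (rule closed_subspace[OF linear_subspace_image[OF linG subV]])
    qed
    have "closure S \<subseteq> S"
    proof
      fix x assume x: "x \<in> closure S"
      then obtain v where v: "v \<in> V" "x = G v" using clV by blast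
      have seg: "v + e *\<^sub>R (w - v) \<in> A" if e: "0 < e" "e \<le> 1" for e
      proof -
        have "x - e *\<^sub>R (x - c) \<in> S"
          by (rule subsetD[OF rel_interior_subset rel_interior_closure_convex_shrink[OF convS c x e]])
        then obtain a where a2: "x - e *\<^sub>R (x - c) = G a" and a1: "a \<in> A \<inter> V" unfolding S_def by (rule imageE)
        note a = a1 a2[symmetric]
        have "a = v + e *\<^sub>R (w - v)"
        proof -
          have wV: "w \<in> V" using w(1) by blast
          have aV: "a \<in> V" using a1 by blast
          show ?thesis using seg_aux[OF linG injG subV v(1) v(2) wV w(2) a(2) aV] .
        qed
        then show ?thesis using a by simp
      qed
      have "v \<in> vcl A" unfolding vcl_def
      proof (intro CollectI exI allI impI)
        fix l' :: real assume l': "l' > 0"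
        show "\<exists>l\<in>{0..l'}. v + l *\<^sub>R (w - v) \<in> A"
        proof (rule bexI[of _ "min l' 1"])
          show "min l' 1 \<in> {0..l'}" using l' by simp
          show "v + min l' 1 *\<^sub>R (w - v) \<in> A" by (rule seg) (use l' in auto)
        qed
      qed
      then have "v \<in> A" using vc unfolding vectorially_closed_def by simp
      then show "x \<in> S" using v unfolding S_def by blast
    qed
    then show ?thesis using closure_subset_eq by blast
  qed
  obtain w cc where wc: "\<forall>x\<in>S. inner w x < cc" "\<forall>x\<in>K. inner w x > cc"
    using separating_hyperplane_closed_compact[OF convS closedS convK cptK Kne disj] by blast
  have cpt2: "compact ((\<lambda>x. inner w x) ` K)"
    by (rule compact_continuous_image[OF _ cptK]) (intro continuous_intros)
  obtain m where m: "m \<in> (\<lambda>x. inner w x) ` K" "\<forall>t\<in>(\<lambda>x. inner w x) ` K. m \<le> t"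
    using compact_attains_inf[OF cpt2] Kne by blast
  define h where "h v = inner w (G v)" for v
  have linh: "linear h" unfolding linear_iff h_def
    using linG by (simp add: linear_add linear_scale inner_add_right)
  have 1: "\<forall>a\<in>A \<inter> span (insert a0 Y). h a < cc" using wc(1) unfolding h_def S_def V_def by blast
  have 2: "cc < m" using m(1) wc(2) by blast
  have 3: "\<forall>b\<in>B. m \<le> h b" using m(2) unfolding h_def K_def by blast
  show ?thesis using linh 1 2 3 by blast
qed

theorem theorem4p3:
  fixes A B Y :: "'a::real_vector set"
  assumes "convex A" and "convex B" and "A \<inter> B = {}"
    and "vectorially_closed A" and "relatively_solid A"
    and "subspace Y" and "\<exists>S. finite S \<and> Y = span S"
    and "B \<subseteq> Y"
    and "compact_in_fd TYPE('b::euclidean_space) Y B"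
  shows "\<exists>f :: 'a \<Rightarrow> real. linear f \<and>
           (SUP a\<in>A. ereal (f a)) < (INF b\<in>B. ereal (f b))"
proof -
  note cA = assms(1) and cB = assms(2) and dis = assms(3) and vc = assms(4)
    and Y = assms(6) and BY = assms(8)
  obtain a0 where a0: "a0 \<in> icr A" using assms(5) unfolding relatively_solid_def by blast
  define L where "L = span {c - d | c d. c \<in> A \<and> d \<in> A}"
  have a0A: "a0 \<in> A" using a0 unfolding icr_def by blast
  have core: "\<forall>x\<in>L. \<exists>l'>0. \<forall>l\<in>{0..l'}. a0 + l *\<^sub>R x \<in> A"
    using a0 unfolding icr_def L_def by blast
  have subL: "subspace L" unfolding L_def by (rule subspace_span)
  have Ane: "A \<noteq> {}" using a0A by blast
  show ?thesis
  proof (cases "B = {}")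
    case True
    have "(SUP a\<in>A. ereal ((\<lambda>x. 0) a)) = 0" using Ane by simp
    moreover have "(INF b\<in>B. ereal ((\<lambda>x. 0) b)) = \<infinity>" using True by (simp add: top_ereal_def)
    ultimately show ?thesis using linear_zero by (intro exI[of _ "\<lambda>x. 0"]) auto
  next
    case False
    obtain g :: "'a \<Rightarrow> 'b" where g: "linear g" "inj_on g Y" "compact (g ` B)"
      using assms(9) unfolding compact_in_fd_def by blast
    obtain h :: "'a \<Rightarrow> real" and cc \<beta> where h: "linear h"
      "\<forall>a\<in>A \<inter> span (insert a0 Y). h a < cc" "cc < \<beta>" "\<forall>b\<in>B. \<beta> \<le> h b"
      using fd_sep[OF cA cB dis vc a0A Y BY g(1) g(2) g(3) False] by blast
    define V where "V = span (insert a0 Y)"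
    have subV: "subspace V" unfolding V_def by (rule subspace_span)
    have a0V: "a0 \<in> V" unfolding V_def by (simp add: span_base)
    have YV: "Y \<subseteq> V" unfolding V_def by (meson span_superset subset_insertI subset_trans)
    define \<gamma> where "\<gamma> = cc - h a0"
    have g0: "\<gamma> \<ge> 0" using h(2) a0A a0V unfolding \<gamma>_def V_def by force
    define p where "p x = \<gamma> * gq A a0 x" for x
    have ne: "gT A a0 x \<noteq> {}" if "x \<in> L" for x by (rule gT_ne[OF core that])
    have hp: "\<forall>x\<in>V \<inter> L. h x \<le> p x"
    proof
      fix x assume x: "x \<in> V \<inter> L"
      show "h x \<le> p x" unfolding p_def
      proof (rule gq_bound[OF ne g0])
        show "x \<in> L" using x by blast
      next
        fix t assume t: "t \<in> gT A a0 x"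
        then have t0: "t > 0" and tA: "a0 + inverse t *\<^sub>R x \<in> A" unfolding gT_def by auto
        have "a0 + inverse t *\<^sub>R x \<in> V" using subV a0V x by (simp add: subspace_add subspace_scale)
        then have "h (a0 + inverse t *\<^sub>R x) < cc" using h(2) tA unfolding V_def by blast
        then have "h a0 + inverse t * h x < cc" using h(1) by (simp add: linear_add linear_scale)
        then have "t * h a0 + h x < t * cc" using t0
          by (simp add: field_simps)
        then show "h x \<le> \<gamma> * t" unfolding \<gamma>_def by (simp add: algebra_simps)
      qed
    qed
    have sub: "\<forall>x\<in>L. \<forall>y\<in>L. p (x+y) \<le> p x + p y"
    proof (intro ballI)
      fix x y assume "x \<in> L" "y \<in> L"
      then have "gq A a0 (x + y) \<le> gq A a0 x + gq A a0 y" using gq_add[OF cA ne ne] by blast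
      then show "p (x+y) \<le> p x + p y" unfolding p_def using g0
        by (metis distrib_left mult_left_mono)
    qed
    have hom: "\<forall>x\<in>L. \<forall>r>0. p (r *\<^sub>R x) = r * p x"
      unfolding p_def using gq_scale[OF _ ne] by simp
    obtain F where F: "linear F" "\<forall>x\<in>V. F x = h x" "\<forall>x\<in>L. F x \<le> p x"
      using hahn_banach_ext[OF subV subL h(1) hp sub hom] by blast
    have FA: "F a \<le> cc" if a: "a \<in> A" for a
    proof -
      have aL: "a - a0 \<in> L" unfolding L_def using a a0A by (intro span_base) blast
      have "F a = F a0 + F (a - a0)" using F(1) by (simp add: linear_diff)
      also have "F a0 = h a0" using F(2) a0V by blast
      also have "F (a - a0) \<le> \<gamma> * gq A a0 (a - a0)" using F(3) aL unfolding p_def by blast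
      also have "\<gamma> * gq A a0 (a - a0) \<le> \<gamma> * 1" using gq_A[OF a] g0 by (rule mult_left_mono)
      finally show ?thesis unfolding \<gamma>_def by simp
    qed
    have FB: "\<beta> \<le> F b" if b: "b \<in> B" for b
      using F(2) h(4) b BY YV by auto
    have "(SUP a\<in>A. ereal (F a)) \<le> ereal cc" using FA by (intro SUP_least) simp
    also have "ereal cc < ereal \<beta>" using h(3) by simp
    also have "ereal \<beta> \<le> (INF b\<in>B. ereal (F b))" using FB by (intro INF_greatest) simp
    finally show ?thesis using F(1) by blast
  qed
qed

end
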